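(* Let $\operatorname{Fr}(f)$ be the number of numerical semigroups with Frobenius number $f$, and $\operatorname{Fr}_q(f)$ the number of those with depth $q$. Then $\operatorname{Fr}(f) \sim \operatorname{Fr}_2(f) + \operatorname{Fr}_3(f)$ as $f \to \infty$.
   Context: A numerical semigroup is a subset $\Lambda \subseteq \mathbb{N}_0$ containing $0$, closed under addition, with finite complement. Its multiplicity is $m(\Lambda) = \min(\Lambda \setminus \{0\})$, its conductor $c(\Lambda)$ is the least $c$ with $c + \mathbb{N}_0 \subseteq \Lambda$, its Frobenius number is $c(\Lambda)-1$, and its depth is $\lceil c(\Lambda)/m(\Lambda) \rceil$. *)

theory Defs
  imports Complex_Main "HOL-Library.Landau_Symbols"
begin

definition numerical_semigroup :: "nat set \<Rightarrow> bool" where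
  "numerical_semigroup S \<longleftrightarrow> 0 \<in> S \<and> (\<forall>x\<in>S. \<forall>y\<in>S. x + y \<in> S) \<and> finite (UNIV - S)"

definition multiplicity_ns :: "nat set \<Rightarrow> nat" where
  "multiplicity_ns S = (LEAST m. m \<in> S \<and> m \<noteq> 0)"

definition conductor :: "nat set \<Rightarrow> nat" where
  "conductor S = (LEAST c. \<forall>n\<ge>c. n \<in> S)"

definition frobenius :: "nat set \<Rightarrow> int" where
  "frobenius S = int (conductor S) - 1"

definition depth :: "nat set \<Rightarrow> nat" where
  "depth S = nat \<lceil>real (conductor S) / real (multiplicity_ns S)\<rceil>"

definition Fr :: "nat \<Rightarrow> nat" where
  "Fr f = card {S. numerical_semigroup S \<and> frobenius S = int f}"

definition Fr_depth :: "nat \<Rightarrow> nat \<Rightarrow> nat" where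
  "Fr_depth q f = card {S. numerical_semigroup S \<and> frobenius S = int f \<and> depth S = q}"

end

theory Submission
  imports Defs "HOL-Library.FuncSet" "HOL-Real_Asymp.Real_Asymp"
begin

lemma ns_cond_ex:
  assumes "numerical_semigroup S" shows "\<exists>c. \<forall>n\<ge>c. n \<in> S"
proof -
  have fin: "finite (UNIV - S)" using assms unfolding numerical_semigroup_def by auto
  obtain c where c: "UNIV - S \<subseteq> {..<c}"
    using fin finite_nat_set_iff_bounded by (auto simp: subset_eq)
  show ?thesis
  proof (intro exI allI impI)
    fix n assume "c \<le> n"
    show "n \<in> S"
    proof (rule ccontr)
      assume "n \<notin> S"
      then have "n < c" using c by auto
      then show False using \<open>c \<le> n\<close> by simp
    qed
  qed
qed

lemma ns_zero: "numerical_semigroup S \<Longrightarrow> 0 \<in> S"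
  unfolding numerical_semigroup_def by auto

lemma ns_add: "numerical_semigroup S \<Longrightarrow> x \<in> S \<Longrightarrow> y \<in> S \<Longrightarrow> x + y \<in> S"
  unfolding numerical_semigroup_def by auto

lemma ns_conductor:
  assumes "numerical_semigroup S" "frobenius S = int f"
  shows "conductor S = f + 1"
  using assms(2) unfolding frobenius_def by linarith

lemma ns_above:
  assumes "numerical_semigroup S" "frobenius S = int f" "n > f"
  shows "n \<in> S"
proof -
  have "\<forall>n\<ge>conductor S. n \<in> S"
    unfolding conductor_def by (rule LeastI_ex[OF ns_cond_ex[OF assms(1)]])
  moreover have "conductor S \<le> n" using ns_conductor[OF assms(1,2)] assms(3) by simp
  ultimately show ?thesis by blast
qed

lemma ns_frob_notin:
  assumes "numerical_semigroup S" "frobenius S = int f"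
  shows "f \<notin> S"
proof
  assume "f \<in> S"
  then have "\<forall>n\<ge>f. n \<in> S" using ns_above[OF assms] by (auto simp: le_less)
  then have "conductor S \<le> f" unfolding conductor_def by (rule Least_le)
  then show False using ns_conductor[OF assms] by simp
qed

lemma ns_mult:
  assumes "numerical_semigroup S" "frobenius S = int f"
  shows "multiplicity_ns S \<in> S" "multiplicity_ns S \<noteq> 0"
    "\<And>x. x \<in> S \<Longrightarrow> x \<noteq> 0 \<Longrightarrow> multiplicity_ns S \<le> x"
    "multiplicity_ns S \<le> f + 1"
proof -
  have ex: "f + 1 \<in> S \<and> f + 1 \<noteq> 0" using ns_above[OF assms, of "f+1"] by simp
  show "multiplicity_ns S \<in> S" "multiplicity_ns S \<noteq> 0"
    unfolding multiplicity_ns_def using LeastI[of "\<lambda>m. m \<in> S \<and> m \<noteq> 0", OF ex] by auto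
  show "\<And>x. x \<in> S \<Longrightarrow> x \<noteq> 0 \<Longrightarrow> multiplicity_ns S \<le> x"
    unfolding multiplicity_ns_def by (rule Least_le) auto
  then show "multiplicity_ns S \<le> f + 1" using ex by auto
qed

lemma ns_add_mult:
  assumes "numerical_semigroup S" "m \<in> S" "x \<in> S"
  shows "x + j * m \<in> S"
proof (induction j)
  case 0 then show ?case using assms by simp
next
  case (Suc j)
  have e: "x + Suc j * m = (x + j * m) + m" by simp
  show ?case unfolding e by (rule ns_add[OF assms(1) Suc assms(2)])
qed

definition kunz :: "nat set \<Rightarrow> nat \<Rightarrow> nat \<Rightarrow> nat" where
  "kunz S m r = (LEAST k. k * m + r \<in> S)"

context
  fixes S f m
  assumes ns: "numerical_semigroup S" and fr: "frobenius S = int f"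
      and mm: "m = multiplicity_ns S"
begin

lemma m_pos: "0 < m" using ns_mult(2)[OF ns fr] mm by simp
lemma m_in: "m \<in> S" using ns_mult(1)[OF ns fr] mm by simp

lemma kunz_ex: "kunz S m r * m + r \<in> S"
proof -
  have "(f+1) * m + r \<in> S"
  proof -
    have "(f+1) * 1 \<le> (f+1) * m" using m_pos by (intro mult_le_mono2) simp
    then show ?thesis using ns_above[OF ns fr, of "(f+1) * m + r"] by simp
  qed
  then show ?thesis unfolding kunz_def by (rule LeastI)
qed

lemma kunz_le: "k * m + r \<in> S \<Longrightarrow> kunz S m r \<le> k"
  unfolding kunz_def by (rule Least_le)

lemma kunz_char: "x \<in> S \<longleftrightarrow> kunz S m (x mod m) \<le> x div m"
proof
  assume "x \<in> S"
  then show "kunz S m (x mod m) \<le> x div m"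
    by (intro kunz_le) (metis div_mult_mod_eq)
next
  assume a: "kunz S m (x mod m) \<le> x div m"
  have "kunz S m (x mod m) * m + x mod m + (x div m - kunz S m (x mod m)) * m \<in> S"
    by (rule ns_add_mult[OF ns m_in kunz_ex])
  moreover have "kunz S m (x mod m) * m + x mod m + (x div m - kunz S m (x mod m)) * m = x"
  proof -
    have "kunz S m (x mod m) * m + (x div m - kunz S m (x mod m)) * m = (x div m) * m"
      using a by (simp add: add_mult_distrib[symmetric])
    then show ?thesis by (metis add.commute add.left_commute div_mult_mod_eq)
  qed
  ultimately show "x \<in> S" by simp
qed

lemma kunz_zero: "kunz S m 0 = 0"
  using kunz_le[of 0 0] ns_zero[OF ns] by simp

lemma kunz_pos: assumes "0 < r" "r < m" shows "1 \<le> kunz S m r"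
proof (rule ccontr)
  assume "\<not> 1 \<le> kunz S m r"
  then have "kunz S m r = 0" by simp
  then have "r \<in> S" using kunz_ex[of r] by simp
  then have "m \<le> r" using ns_mult(3)[OF ns fr, of r] mm assms by simp
  then show False using assms by simp
qed

lemma rho_pos: "0 < f mod m"
proof (rule ccontr)
  assume "\<not> 0 < f mod m"
  then have "f = (f div m) * m" using div_mult_mod_eq[of f m] by simp
  then have "f \<in> S" using ns_add_mult[OF ns m_in ns_zero[OF ns], of "f div m"] by simp
  then show False using ns_frob_notin[OF ns fr] by simp
qed

lemma kunz_upper:
  assumes "r < m" "r \<noteq> f mod m"
  shows "kunz S m r * m + r + 1 \<le> f + m"
proof (cases "r = 0")
  case True then show ?thesis using kunz_zero m_pos by simp
next
  case False
  define k where "k = kunz S m r"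
  have k1: "1 \<le> k" using kunz_pos False assms k_def by simp
  have "(k - 1) * m + r \<notin> S"
  proof
    assume "(k - 1) * m + r \<in> S"
    then have "k \<le> k - 1" using kunz_le k_def by simp
    then show False using k1 by simp
  qed
  then have le: "(k - 1) * m + r \<le> f" using ns_above[OF ns fr] by (meson not_le)
  have "(k - 1) * m + r \<noteq> f"
  proof
    assume "(k - 1) * m + r = f"
    then have "f mod m = r" using assms(1) by (metis mod_mult_self3 mod_less)
    then show False using assms by simp
  qed
  then have "(k - 1) * m + r + 1 \<le> f" using le by simp
  moreover have "k * m = (k - 1) * m + m" using k1 by (metis le_add_diff_inverse2 mult.commute mult_Suc_right plus_1_eq_Suc add.commute)
  ultimately show ?thesis unfolding k_def[symmetric] by simp
qed

lemma kunz_pair: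
  assumes "r < m" "s < m" "(r + s) mod m = f mod m"
  shows "f + m \<le> kunz S m r * m + r + kunz S m s * m + s"
proof -
  define x where "x = kunz S m r * m + r + (kunz S m s * m + s)"
  have xS: "x \<in> S" unfolding x_def by (rule ns_add[OF ns kunz_ex kunz_ex])
  have xm: "x mod m = f mod m" unfolding x_def using assms(3)
    by (metis (no_types, lifting) add.assoc add.left_commute mod_mult_self3)
  have "f < x"
  proof (rule ccontr)
    assume "\<not> f < x"
    then have "x \<le> f" by simp
    then have "m dvd (f - x)" using xm mod_eq_dvd_iff_nat[of x f m] by simp
    then have "(f - x) mod m = 0" by simp
    then have "f - x = ((f - x) div m) * m" using div_mult_mod_eq[of "f - x" m] by simp
    then have "x + ((f - x) div m) * m = f" using \<open>x \<le> f\<close> by simp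
    moreover have "x + ((f - x) div m) * m \<in> S" by (rule ns_add_mult[OF ns m_in xS])
    ultimately show False using ns_frob_notin[OF ns fr] by simp
  qed
  then have "m dvd (x - f)" using xm mod_eq_dvd_iff_nat[of f x m] by simp
  then have "m \<le> x - f" using \<open>f < x\<close> by (simp add: dvd_imp_le)
  then have "f + m \<le> x" using \<open>f < x\<close> by linarith
  then show ?thesis unfolding x_def by (simp add: add.assoc)
qed

lemma kunz_double:
  assumes "2 * r < m"
  shows "kunz S m (2 * r) \<le> 2 * kunz S m r"
proof -
  have "kunz S m r * m + r + (kunz S m r * m + r) \<in> S" by (rule ns_add[OF ns kunz_ex kunz_ex])
  moreover have "kunz S m r * m + r + (kunz S m r * m + r) = (2 * kunz S m r) * m + 2 * r" by simp
  ultimately show ?thesis using kunz_le by simp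
qed

lemma kunz_rho: "kunz S m (f mod m) * m + f mod m = f + m"
proof -
  have "f + m \<in> S" using ns_above[OF ns fr] m_pos by simp
  then have a: "kunz S m (f mod m) \<le> f div m + 1"
    using kunz_char[of "f+m"] m_pos by simp
  have "f \<notin> S" by (rule ns_frob_notin[OF ns fr])
  then have b: "f div m < kunz S m (f mod m)" using kunz_char[of f] by simp
  have "kunz S m (f mod m) = f div m + 1" using a b by simp
  then show ?thesis by (simp add: algebra_simps)
qed

end

lemma card_blocks:
  fixes SS :: "'a set" and k :: "'a \<Rightarrow> nat \<Rightarrow> nat" and J :: "'j set"
    and B :: "'j \<Rightarrow> nat set" and A :: "'j \<Rightarrow> (nat \<Rightarrow> nat) set"
  assumes fJ: "finite J" and fA: "\<And>j. j \<in> J \<Longrightarrow> finite (A j)"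
    and inj: "\<And>S1 S2. S1 \<in> SS \<Longrightarrow> S2 \<in> SS \<Longrightarrow> (\<And>j r. j \<in> J \<Longrightarrow> r \<in> B j \<Longrightarrow> k S1 r = k S2 r) \<Longrightarrow> S1 = S2"
    and mem: "\<And>S j. S \<in> SS \<Longrightarrow> j \<in> J \<Longrightarrow> restrict (k S) (B j) \<in> A j"
  shows "card SS \<le> (\<Prod>j\<in>J. card (A j))"
proof -
  define F where "F S = (\<lambda>j\<in>J. restrict (k S) (B j))" for S
  have "inj_on F SS"
  proof (rule inj_onI)
    fix S1 S2 assume s: "S1 \<in> SS" "S2 \<in> SS" "F S1 = F S2"
    show "S1 = S2"
    proof (rule inj[OF s(1,2)])
      fix j r assume jr: "j \<in> J" "r \<in> B j"
      have "F S1 j = F S2 j" using s(3) by simp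
      then have "restrict (k S1) (B j) r = restrict (k S2) (B j) r" using jr by (simp add: F_def)
      then show "k S1 r = k S2 r" using jr by simp
    qed
  qed
  moreover have "F ` SS \<subseteq> PiE J A"
    using mem by (auto simp: F_def)
  moreover have "finite (PiE J A)" using fJ fA by (intro finite_PiE) auto
  ultimately have "card SS \<le> card (PiE J A)" by (rule card_inj_on_le)
  also have "\<dots> = (\<Prod>j\<in>J. card (A j))" by (rule card_PiE[OF fJ])
  finally show ?thesis .
qed

definition Tset :: "nat \<Rightarrow> (nat \<times> nat) set" where
  "Tset P = {(a,b). 1 \<le> a \<and> a \<le> P \<and> 1 \<le> b \<and> b \<le> P \<and> P \<le> a + b}"
definition Uset :: "nat \<Rightarrow> nat set" where
  "Uset P = {a. 1 \<le> a \<and> a \<le> P \<and> P \<le> 2 * a}"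
definition Mset :: "(nat \<times> nat \<times> nat \<times> nat) set" where
  "Mset = {(a,b,c,d). (a,b) \<in> Tset 3 \<and> (c,d) \<in> Tset 3 \<and> c \<le> 2*a}"

lemma Tset_eq: "Tset P = Set.filter (\<lambda>(a,b). P \<le> a + b) ({1..P} \<times> {1..P})"
  unfolding Tset_def by auto
lemma finite_Tset: "finite (Tset P)" unfolding Tset_eq by simp
lemma card_T3: "card (Tset 3) = 8" unfolding Tset_eq by code_simp
lemma card_T4: "card (Tset 4) = 13" unfolding Tset_eq by code_simp
lemma card_T_le: "card (Tset P) \<le> P * P"
proof -
  have "card (Tset P) \<le> card ({1..P} \<times> {1..P})" unfolding Tset_eq
    by (rule card_mono) auto
  then show ?thesis by simp
qed
lemma Mset_eq: "Mset = Set.filter (\<lambda>(a,b,c,d). (a,b) \<in> Tset 3 \<and> (c,d) \<in> Tset 3 \<and> c \<le> 2*a)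
   ({1..3::nat} \<times> {1..3::nat} \<times> {1..3::nat} \<times> {1..3::nat})"
  unfolding Mset_def Tset_def by auto
lemma finite_Mset: "finite Mset" unfolding Mset_eq by simp
lemma card_M: "card Mset = 58" unfolding Mset_eq Tset_eq by code_simp
lemma finite_Uset: "finite (Uset P)" unfolding Uset_def by (rule finite_subset[of _ "{..P}"]) auto
lemma card_U_le: "card (Uset P) \<le> P div 2 + 1"
proof -
  have "Uset P \<subseteq> {P - P div 2..P}" unfolding Uset_def by auto
  then have "card (Uset P) \<le> card {P - P div 2..P}" by (intro card_mono) auto
  then show ?thesis by simp
qed

lemma pow_bound1: "5 \<le> P \<Longrightarrow> 100 * (P*P)^2 \<le> 81 * (4::nat)^P"
proof (induction P rule: dec_induct)
  case base then show ?case by simp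
next
  case (step n)
  have "5 * Suc n \<le> 6 * n" using step.hyps by simp
  then have "(5 * Suc n)^4 \<le> (6 * n)^4" by (rule power_mono) simp
  then have a: "625 * Suc n^4 \<le> 1296 * n^4" by (simp only: power_mult_distrib) simp
  have e1: "(Suc n * Suc n)^2 = Suc n ^ 4" by (simp only: power2_eq_square power4_eq_xxxx mult.assoc)
  have e2: "(n * n)^2 = n ^ 4" by (simp only: power2_eq_square power4_eq_xxxx mult.assoc)
  have "100 * (Suc n * Suc n)^2 \<le> 4 * (100 * (n*n)^2)" unfolding e1 e2 using a by linarith
  also have "\<dots> \<le> 4 * (81 * 4^n)" using step.IH by simp
  finally show ?case by simp
qed
lemma pow_bound2: "4 \<le> P \<Longrightarrow> 10 * (P div 2 + 1)^2 \<le> 9 * (2::nat)^P"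
proof (induction P rule: dec_induct)
  case base then show ?case by simp
next
  case (step n)
  have "Suc n div 2 + 1 \<le> n div 2 + 2" by simp
  then have "(Suc n div 2 + 1)^2 \<le> (n div 2 + 2)^2" by (rule power_mono) simp
  also have "(n div 2 + 2)^2 \<le> 2 * (n div 2 + 1)^2"
  proof -
    have "2 \<le> n div 2" using step by auto
    then have "2 * 2 \<le> (n div 2) * (n div 2)" using mult_le_mono by blast
    then show ?thesis by (simp add: power2_eq_square algebra_simps)
  qed
  finally have "10 * (Suc n div 2 + 1)^2 \<le> 2 * (10 * (n div 2 + 1)^2)" by simp
  also have "\<dots> \<le> 2 * (9 * 2^n)" using step.IH by simp
  finally show ?case by simp
qed

definition sig :: "nat \<Rightarrow> nat \<Rightarrow> nat \<Rightarrow> nat" where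
  "sig f m r = (if r < f mod m then f mod m - r else f mod m + m - r)"
definition Ires :: "nat \<Rightarrow> nat \<Rightarrow> nat set" where
  "Ires f m = {r. 0 < r \<and> r < m \<and> r \<noteq> f mod m}"
definition R0 :: "nat \<Rightarrow> nat \<Rightarrow> nat set" where
  "R0 f m = (if f div m = 3 then {r. f mod m < r \<and> m < 8*r \<and> 4*r < m} else {})"
definition blk4 :: "nat \<Rightarrow> nat \<Rightarrow> nat \<Rightarrow> nat set" where
  "blk4 f m r = {r, sig f m r, 2*r, sig f m (2*r)}"
definition MR :: "nat \<Rightarrow> nat \<Rightarrow> nat set" where
  "MR f m = (\<Union>r\<in>R0 f m. blk4 f m r)"
definition Jset :: "nat \<Rightarrow> nat \<Rightarrow> nat set" where
  "Jset f m = {r \<in> Ires f m - MR f m. r \<le> sig f m r} \<union> R0 f m"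
definition Blk :: "nat \<Rightarrow> nat \<Rightarrow> nat \<Rightarrow> nat set" where
  "Blk f m j = (if j \<in> R0 f m then blk4 f m j else {j, sig f m j})"
definition Save :: "nat \<Rightarrow> nat \<Rightarrow> nat set" where
  "Save f m = {r \<in> Ires f m. r < f mod m \<or> 4 \<le> f div m} \<union> R0 f m"
definition bud :: "nat \<Rightarrow> nat \<Rightarrow> nat \<Rightarrow> nat" where
  "bud f m r = (if r < f mod m then f div m + 1 else f div m)"

context
  fixes f m :: nat
  assumes mpos: "0 < m" and rpos: "0 < f mod m"
begin

lemma rho_lt: "f mod m < m" using mpos by simp

lemma sig_I: "r \<in> Ires f m \<Longrightarrow> sig f m r \<in> Ires f m"
  using rho_lt unfolding Ires_def sig_def by (auto; arith)

lemma sig_sig: "r \<in> Ires f m \<Longrightarrow> sig f m (sig f m r) = r"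
  using rho_lt unfolding Ires_def sig_def by auto

lemma sig_lt: "r \<in> Ires f m \<Longrightarrow> (sig f m r < f mod m) = (r < f mod m)"
  using rho_lt unfolding Ires_def sig_def by auto

lemma sig_sum1: "r \<in> Ires f m \<Longrightarrow> r < f mod m \<Longrightarrow> r + sig f m r = f mod m"
  unfolding Ires_def sig_def by auto

lemma sig_sum2: "r \<in> Ires f m \<Longrightarrow> \<not> r < f mod m \<Longrightarrow> r + sig f m r = f mod m + m"
  using rho_lt unfolding Ires_def sig_def by auto

lemma R0_D: assumes "j \<in> R0 f m"
  shows "f div m = 3" "f mod m < j" "m < 8*j" "4*j < m"
    "sig f m j = f mod m + m - j" "sig f m (2*j) = f mod m + m - 2*j"
  using assms unfolding R0_def sig_def by (auto split: if_splits)

lemma blk4_I: "j \<in> R0 f m \<Longrightarrow> blk4 f m j \<subseteq> Ires f m"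
  using R0_D[of j] rho_lt unfolding blk4_def Ires_def by auto

lemma blk4_sig: "j \<in> R0 f m \<Longrightarrow> r \<in> blk4 f m j \<Longrightarrow> sig f m r \<in> blk4 f m j"
proof -
  assume j: "j \<in> R0 f m" and r: "r \<in> blk4 f m j"
  have jI: "j \<in> Ires f m" "2*j \<in> Ires f m" using blk4_I[OF j] unfolding blk4_def by auto
  show ?thesis using r sig_sig[OF jI(1)] sig_sig[OF jI(2)] unfolding blk4_def by auto
qed

lemma MR_sig: "r \<in> MR f m \<Longrightarrow> sig f m r \<in> MR f m"
  unfolding MR_def using blk4_sig by blast

lemma MR_I: "MR f m \<subseteq> Ires f m"
  unfolding MR_def using blk4_I by blast

lemma blk4_disj: "j1 \<in> R0 f m \<Longrightarrow> j2 \<in> R0 f m \<Longrightarrow> j1 \<noteq> j2 \<Longrightarrow> blk4 f m j1 \<inter> blk4 f m j2 = {}"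
  using R0_D[of j1] R0_D[of j2] unfolding blk4_def by auto

lemma R0_MR: "R0 f m \<subseteq> MR f m"
  unfolding MR_def blk4_def by auto

lemma finite_Ires: "finite (Ires f m)" unfolding Ires_def by auto

lemma finite_Jset: "finite (Jset f m)"
proof -
  have "R0 f m \<subseteq> Ires f m" using R0_MR MR_I by auto
  then show ?thesis unfolding Jset_def using finite_Ires by (auto intro: finite_subset)
qed

lemma Blk_I: "j \<in> Jset f m \<Longrightarrow> Blk f m j \<subseteq> Ires f m"
  unfolding Jset_def Blk_def using blk4_I sig_I by auto

lemma Blk_disj:
  assumes j1: "j1 \<in> Jset f m" and j2: "j2 \<in> Jset f m" and ne: "j1 \<noteq> j2"
  shows "Blk f m j1 \<inter> Blk f m j2 = {}"
proof (cases "j1 \<in> R0 f m")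
  case True
  note T1 = True
  show ?thesis
  proof (cases "j2 \<in> R0 f m")
    case True then show ?thesis using T1 blk4_disj ne unfolding Blk_def by auto
  next
    case False
    then have a: "j2 \<in> Ires f m" "j2 \<notin> MR f m" using j2 unfolding Jset_def by auto
    then have "sig f m j2 \<notin> MR f m" using MR_sig sig_sig by metis
    moreover have "blk4 f m j1 \<subseteq> MR f m" using T1 unfolding MR_def by auto
    ultimately show ?thesis using a T1 False unfolding Blk_def by auto
  qed
next
  case False
  note F1 = False
  then have a: "j1 \<in> Ires f m" "j1 \<notin> MR f m" "j1 \<le> sig f m j1" using j1 unfolding Jset_def by auto
  show ?thesis
  proof (cases "j2 \<in> R0 f m")
    case True
    have "sig f m j1 \<notin> MR f m" using a MR_sig sig_sig by metis
    moreover have "blk4 f m j2 \<subseteq> MR f m" using True unfolding MR_def by auto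
    ultimately show ?thesis using a True F1 unfolding Blk_def by auto
  next
    case False
    then have b: "j2 \<in> Ires f m" "j2 \<le> sig f m j2" using j2 unfolding Jset_def by auto
    have s1: "sig f m (sig f m j1) = j1" "sig f m (sig f m j2) = j2" using a b sig_sig by auto
    have "j1 \<noteq> sig f m j2"
    proof
      assume e: "j1 = sig f m j2"
      then have "sig f m j1 = j2" using s1 by simp
      then show False using a b e ne by simp
    qed
    moreover have "sig f m j1 \<noteq> j2"
    proof
      assume e: "sig f m j1 = j2"
      then have "j1 = sig f m j2" using s1 by simp
      then show False using a b e ne by simp
    qed
    moreover have "sig f m j1 \<noteq> sig f m j2" using s1 ne by metis
    ultimately show ?thesis using ne F1 False unfolding Blk_def by auto
  qed
qed

lemma Blk_cover: "(\<Union>j\<in>Jset f m. Blk f m j) = Ires f m"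
proof
  show "(\<Union>j\<in>Jset f m. Blk f m j) \<subseteq> Ires f m" using Blk_I by auto
next
  show "Ires f m \<subseteq> (\<Union>j\<in>Jset f m. Blk f m j)"
  proof
    fix r assume r: "r \<in> Ires f m"
    show "r \<in> (\<Union>j\<in>Jset f m. Blk f m j)"
    proof (cases "r \<in> MR f m")
      case True
      then obtain j where "j \<in> R0 f m" "r \<in> blk4 f m j" unfolding MR_def by auto
      then show ?thesis unfolding Jset_def Blk_def by auto
    next
      case False
      have sr: "sig f m r \<notin> MR f m" using False r MR_sig sig_sig by metis
      have nR: "r \<notin> R0 f m" "sig f m r \<notin> R0 f m" using False sr R0_MR by auto
      show ?thesis
      proof (cases "r \<le> sig f m r")
        case True
        then have "r \<in> Jset f m" using r False unfolding Jset_def by auto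
        then show ?thesis using nR unfolding Blk_def by auto
      next
        case False
        then have "sig f m r \<le> sig f m (sig f m r)" using sig_sig[OF r] by simp
        then have "sig f m r \<in> Jset f m" using sig_I[OF r] sr unfolding Jset_def by auto
        moreover have "r \<in> Blk f m (sig f m r)" using nR sig_sig[OF r] unfolding Blk_def by auto
        ultimately show ?thesis by blast
      qed
    qed
  qed
qed

end

definition okb :: "nat \<Rightarrow> nat \<Rightarrow> nat set \<Rightarrow> (nat \<Rightarrow> nat) \<Rightarrow> bool" where
  "okb f m b g = ((\<forall>r\<in>b. 1 \<le> g r \<and> g r * m + r + 1 \<le> f + m) \<and>
     (\<forall>r\<in>b. \<forall>s\<in>b. (r + s) mod m = f mod m \<longrightarrow> f + m \<le> g r * m + r + g s * m + s) \<and>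
     (\<forall>r\<in>b. 2*r \<in> b \<longrightarrow> g (2*r) \<le> 2 * g r))"
definition Aset :: "nat \<Rightarrow> nat \<Rightarrow> nat set \<Rightarrow> (nat \<Rightarrow> nat) set" where
  "Aset f m b = {g \<in> b \<rightarrow>\<^sub>E (UNIV::nat set). okb f m b g}"

context
  fixes f m :: nat
  assumes mpos: "0 < m" and rpos: "0 < f mod m" and q3: "3 \<le> f div m"
begin

lemma fdec: "f = f div m * m + f mod m" by simp

lemma AR_up1: assumes "a*m + r + 1 \<le> f + m" "r < f mod m" shows "a \<le> f div m + 1"
proof (rule ccontr)
  assume "\<not> a \<le> f div m + 1"
  then have "(f div m + 2) * m \<le> a * m" by (intro mult_le_mono1) simp
  then have "f div m * m + 2 * m \<le> a * m" by (simp add: algebra_simps)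
  then show False using assms fdec mod_less_divisor[OF mpos, of f] by linarith
qed

lemma AR_up2: assumes "a*m + r + 1 \<le> f + m" "f mod m < r" shows "a \<le> f div m"
proof (rule ccontr)
  assume "\<not> a \<le> f div m"
  then have "(f div m + 1) * m \<le> a * m" by (intro mult_le_mono1) simp
  then have "f div m * m + m \<le> a * m" by (simp add: algebra_simps)
  then show False using assms fdec by linarith
qed

lemma AR_s1: assumes "r + s = f mod m" "f + m \<le> a*m + r + b*m + s" shows "f div m + 1 \<le> a + b"
proof -
  have e: "(f div m + 1) * m = f div m * m + m" "(a+b)*m = a*m + b*m" by (simp_all add: algebra_simps)
  have "(f div m + 1) * m \<le> (a + b) * m" using assms fdec e by linarith
  then show ?thesis using mpos by (meson mult_le_cancel2)
qed

lemma AR_s2: assumes "r + s = f mod m + m" "f + m \<le> a*m + r + b*m + s" shows "f div m \<le> a + b"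
proof -
  have e: "(a+b)*m = a*m + b*m" by (simp_all add: algebra_simps)
  have "(f div m) * m \<le> (a + b) * m" using assms fdec e by linarith
  then show ?thesis using mpos by simp
qed

lemma mod_rho: "(f mod m) mod m = f mod m" "(f mod m + m) mod m = f mod m" by simp_all

lemma okbD:
  assumes "g \<in> Aset f m b"
  shows "\<And>r. r \<in> b \<Longrightarrow> 1 \<le> g r" "\<And>r. r \<in> b \<Longrightarrow> g r * m + r + 1 \<le> f + m"
    "\<And>r s. r \<in> b \<Longrightarrow> s \<in> b \<Longrightarrow> (r + s) mod m = f mod m \<Longrightarrow> f + m \<le> g r * m + r + g s * m + s"
    "\<And>r. r \<in> b \<Longrightarrow> 2*r \<in> b \<Longrightarrow> g (2*r) \<le> 2 * g r"
  using assms unfolding Aset_def okb_def by auto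

lemma pair_T:
  assumes j: "j \<in> Ires f m" and g: "g \<in> Aset f m {j, sig f m j}"
  shows "(g j, g (sig f m j)) \<in> Tset (bud f m j)"
proof (cases "j < f mod m")
  case True
  have s: "sig f m j < f mod m" using sig_lt[OF mpos rpos j] True by simp
  have sum: "j + sig f m j = f mod m" using sig_sum1[OF mpos rpos j True] .
  have "f div m + 1 \<le> g j + g (sig f m j)"
    by (rule AR_s1[OF sum okbD(3)[OF g]]) (auto simp: sum)
  moreover have "g j \<le> f div m + 1" by (rule AR_up1[OF okbD(2)[OF g] True]) simp
  moreover have "g (sig f m j) \<le> f div m + 1" by (rule AR_up1[OF okbD(2)[OF g] s]) simp
  moreover have "1 \<le> g j" "1 \<le> g (sig f m j)" using okbD(1)[OF g] by auto
  ultimately show ?thesis using True unfolding Tset_def bud_def by auto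
next
  case False
  have jn: "f mod m < j" using False j unfolding Ires_def by auto
  have s: "f mod m < sig f m j" using sig_lt[OF mpos rpos j] sig_I[OF mpos rpos j] False
    unfolding Ires_def by auto
  have sum: "j + sig f m j = f mod m + m" using sig_sum2[OF mpos rpos j False] .
  have "f div m \<le> g j + g (sig f m j)"
    by (rule AR_s2[OF sum okbD(3)[OF g]]) (auto simp: sum)
  moreover have "g j \<le> f div m" by (rule AR_up2[OF okbD(2)[OF g] jn]) simp
  moreover have "g (sig f m j) \<le> f div m" by (rule AR_up2[OF okbD(2)[OF g] s]) simp
  moreover have "1 \<le> g j" "1 \<le> g (sig f m j)" using okbD(1)[OF g] by auto
  ultimately show ?thesis using False unfolding Tset_def bud_def by auto
qed

lemma single_U:
  assumes j: "j \<in> Ires f m" and js: "sig f m j = j" and g: "g \<in> Aset f m {j}"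
  shows "g j \<in> Uset (bud f m j)"
proof (cases "j < f mod m")
  case True
  have sum: "j + j = f mod m" using sig_sum1[OF mpos rpos j True] js by simp
  have "f div m + 1 \<le> g j + g j"
    by (rule AR_s1[OF sum okbD(3)[OF g]]) (auto simp: sum)
  moreover have "g j \<le> f div m + 1" by (rule AR_up1[OF okbD(2)[OF g] True]) simp
  moreover have "1 \<le> g j" using okbD(1)[OF g] by auto
  ultimately show ?thesis using True unfolding Uset_def bud_def by auto
next
  case False
  have jn: "f mod m < j" using False j unfolding Ires_def by auto
  have sum: "j + j = f mod m + m" using sig_sum2[OF mpos rpos j False] js by simp
  have "f div m \<le> g j + g j"
    by (rule AR_s2[OF sum okbD(3)[OF g]]) (auto simp: sum)
  moreover have "g j \<le> f div m" by (rule AR_up2[OF okbD(2)[OF g] jn]) simp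
  moreover have "1 \<le> g j" using okbD(1)[OF g] by auto
  ultimately show ?thesis using False unfolding Uset_def bud_def by auto
qed

lemma quad_M:
  assumes j: "j \<in> R0 f m" and g: "g \<in> Aset f m (blk4 f m j)"
  shows "(g j, g (sig f m j), g (2*j), g (sig f m (2*j))) \<in> Mset"
proof -
  note R = R0_D[OF mpos rpos j]
  have I: "j \<in> Ires f m" "2*j \<in> Ires f m" using blk4_I[OF mpos rpos j] unfolding blk4_def by auto
  have mem: "j \<in> blk4 f m j" "sig f m j \<in> blk4 f m j" "2*j \<in> blk4 f m j" "sig f m (2*j) \<in> blk4 f m j"
    unfolding blk4_def by auto
  have gt: "f mod m < j" "f mod m < sig f m j" "f mod m < 2*j" "f mod m < sig f m (2*j)"
    using R by auto
  have sum1: "j + sig f m j = f mod m + m" using R by auto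
  have sum2: "2*j + sig f m (2*j) = f mod m + m" using R by auto
  have "f div m \<le> g j + g (sig f m j)"
    by (rule AR_s2[OF sum1 okbD(3)[OF g mem(1,2)]]) (simp add: sum1)
  moreover have "f div m \<le> g (2*j) + g (sig f m (2*j))"
    by (rule AR_s2[OF sum2 okbD(3)[OF g mem(3,4)]]) (simp add: sum2)
  moreover have "g j \<le> f div m" "g (sig f m j) \<le> f div m" "g (2*j) \<le> f div m" "g (sig f m (2*j)) \<le> f div m"
    using AR_up2[OF okbD(2)[OF g mem(1)] gt(1)] AR_up2[OF okbD(2)[OF g mem(2)] gt(2)]
      AR_up2[OF okbD(2)[OF g mem(3)] gt(3)] AR_up2[OF okbD(2)[OF g mem(4)] gt(4)] by auto
  moreover have "1 \<le> g j" "1 \<le> g (sig f m j)" "1 \<le> g (2*j)" "1 \<le> g (sig f m (2*j))"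
    using okbD(1)[OF g] mem by auto
  moreover have "g (2*j) \<le> 2 * g j" using okbD(4)[OF g mem(1) mem(3)] .
  ultimately show ?thesis using R(1) unfolding Mset_def Tset_def by auto
qed

lemma finite_Aset: assumes "finite b" shows "finite (Aset f m b)"
proof -
  have "Aset f m b \<subseteq> b \<rightarrow>\<^sub>E {0..f+m}"
  proof
    fix g assume g: "g \<in> Aset f m b"
    have "\<And>r. r \<in> b \<Longrightarrow> g r \<le> f + m"
    proof -
      fix r assume r: "r \<in> b"
      have "g r * 1 \<le> g r * m" by (rule mult_le_mono2) (use mpos in simp)
      then have "g r \<le> g r * m" by simp
      then show "g r \<le> f + m" using okbD(2)[OF g r] by linarith
    qed
    then show "g \<in> b \<rightarrow>\<^sub>E {0..f+m}" using g unfolding Aset_def by auto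
  qed
  moreover have "finite (b \<rightarrow>\<^sub>E {0..f+m})" using assms by (intro finite_PiE) auto
  ultimately show ?thesis by (rule finite_subset)
qed

end

context
  fixes f m :: nat
  assumes mpos: "0 < m" and rpos: "0 < f mod m" and q3: "3 \<le> f div m"
begin

lemma card_pair_le:
  assumes j: "j \<in> Ires f m" and ne: "j \<noteq> sig f m j"
  shows "card (Aset f m {j, sig f m j}) \<le> card (Tset (bud f m j))"
proof (rule card_inj_on_le[OF _ _ finite_Tset])
  show "inj_on (\<lambda>g. (g j, g (sig f m j))) (Aset f m {j, sig f m j})"
  proof (rule inj_onI)
    fix g1 g2 assume g: "g1 \<in> Aset f m {j, sig f m j}" "g2 \<in> Aset f m {j, sig f m j}"
      and e: "(g1 j, g1 (sig f m j)) = (g2 j, g2 (sig f m j))"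
    show "g1 = g2" by (rule PiE_ext[of _ "{j, sig f m j}" "\<lambda>_. UNIV"]) (use g e in \<open>auto simp: Aset_def\<close>)
  qed
  show "(\<lambda>g. (g j, g (sig f m j))) ` Aset f m {j, sig f m j} \<subseteq> Tset (bud f m j)"
    using pair_T[OF mpos rpos q3 j] by auto
qed

lemma card_single_le:
  assumes j: "j \<in> Ires f m" and e: "sig f m j = j"
  shows "card (Aset f m {j}) \<le> card (Uset (bud f m j))"
proof (rule card_inj_on_le[OF _ _ finite_Uset])
  show "inj_on (\<lambda>g. g j) (Aset f m {j})"
  proof (rule inj_onI)
    fix g1 g2 assume g: "g1 \<in> Aset f m {j}" "g2 \<in> Aset f m {j}" and e: "g1 j = g2 j"
    show "g1 = g2" by (rule PiE_ext[of _ "{j}" "\<lambda>_. UNIV"]) (use g e in \<open>auto simp: Aset_def\<close>)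
  qed
  show "(\<lambda>g. g j) ` Aset f m {j} \<subseteq> Uset (bud f m j)"
    using single_U[OF mpos rpos q3 j e] by auto
qed

lemma card_quad_le:
  assumes j: "j \<in> R0 f m"
  shows "card (Aset f m (blk4 f m j)) \<le> 58"
proof -
  have "card (Aset f m (blk4 f m j)) \<le> card Mset"
  proof (rule card_inj_on_le[OF _ _ finite_Mset])
    show "inj_on (\<lambda>g. (g j, g (sig f m j), g (2*j), g (sig f m (2*j)))) (Aset f m (blk4 f m j))"
    proof (rule inj_onI)
      fix g1 g2 assume g: "g1 \<in> Aset f m (blk4 f m j)" "g2 \<in> Aset f m (blk4 f m j)"
        and e: "(g1 j, g1 (sig f m j), g1 (2*j), g1 (sig f m (2*j))) = (g2 j, g2 (sig f m j), g2 (2*j), g2 (sig f m (2*j)))"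
      show "g1 = g2" by (rule PiE_ext[of _ "blk4 f m j" "\<lambda>_. UNIV"]) (use g e in \<open>auto simp: Aset_def blk4_def\<close>)
    qed
    show "(\<lambda>g. (g j, g (sig f m j), g (2*j), g (sig f m (2*j)))) ` Aset f m (blk4 f m j) \<subseteq> Mset"
      using quad_M[OF mpos rpos q3 j] by auto
  qed
  then show ?thesis using card_M by simp
qed

lemma Save_I: "Save f m \<subseteq> Ires f m"
  unfolding Save_def using R0_MR[OF mpos rpos] MR_I[OF mpos rpos] by auto

lemma blk_ineq:
  assumes j: "j \<in> Jset f m"
  shows "10 ^ card (Blk f m j \<inter> Save f m) * card (Aset f m (Blk f m j))^2
      \<le> 2 ^ (\<Sum>r\<in>Blk f m j. bud f m r) * 9 ^ card (Blk f m j \<inter> Save f m)"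
proof (cases "j \<in> R0 f m")
  case True
  note R = R0_D[OF mpos rpos True]
  have B: "Blk f m j = {j, f mod m + m - j, 2*j, f mod m + m - 2*j}"
    using True R unfolding Blk_def blk4_def by simp
  have d: "j \<noteq> f mod m + m - j" "j \<noteq> 2*j" "j \<noteq> f mod m + m - 2*j"
    "f mod m + m - j \<noteq> 2*j" "f mod m + m - j \<noteq> f mod m + m - 2*j" "2*j \<noteq> f mod m + m - 2*j"
    using R by arith+
  have c4: "card (Blk f m j) = 4" unfolding B using d by simp
  have "(\<Sum>r\<in>Blk f m j. bud f m r) = (\<Sum>r\<in>Blk f m j. 3)"
    by (rule sum.cong) (use R in \<open>auto simp: B bud_def\<close>)
  then have bs: "(\<Sum>r\<in>Blk f m j. bud f m r) = 12" using c4 by simp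
  have "Blk f m j \<inter> Save f m = {j}"
    unfolding B Save_def R0_def using R True by (auto simp: R0_def)
  then have cs: "card (Blk f m j \<inter> Save f m) = 1" by simp
  have "card (Aset f m (Blk f m j)) \<le> 58" using card_quad_le[OF True] True unfolding Blk_def by simp
  then have "card (Aset f m (Blk f m j))^2 \<le> 58^2" by (rule power_mono) simp
  then show ?thesis unfolding bs cs by simp
next
  case False
  then have jI: "j \<in> Ires f m" "j \<notin> MR f m" using j unfolding Jset_def by auto
  have sI: "sig f m j \<in> Ires f m" using sig_I[OF mpos rpos jI(1)] .
  have sM: "sig f m j \<notin> MR f m" using jI MR_sig[OF mpos rpos] sig_sig[OF mpos rpos] by metis
  have nR: "j \<notin> R0 f m" "sig f m j \<notin> R0 f m" using jI sM R0_MR[OF mpos rpos] by auto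
  have bsig: "bud f m (sig f m j) = bud f m j"
    unfolding bud_def using sig_lt[OF mpos rpos jI(1)] by simp
  have Bj: "Blk f m j = {j, sig f m j}" using False unfolding Blk_def by simp
  show ?thesis
  proof (cases "sig f m j = j")
    case True
    have B1: "Blk f m j = {j}" using Bj True by simp
    have cU: "card (Aset f m {j}) \<le> bud f m j div 2 + 1"
      using card_single_le[OF jI(1) True] card_U_le[of "bud f m j"] by linarith
    show ?thesis
    proof (cases "j < f mod m \<or> 4 \<le> f div m")
      case True
      have "{j} \<inter> Save f m = {j}" using True jI unfolding Save_def by auto
      then have cs: "card ({j} \<inter> Save f m) = 1" by simp
      have P4: "4 \<le> bud f m j" using True q3 unfolding bud_def by auto
      have sq: "card (Aset f m {j})^2 \<le> (bud f m j div 2 + 1)^2" by (rule power_mono[OF cU]) simp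
      have "10 * card (Aset f m {j})^2 \<le> 9 * 2 ^ bud f m j" using sq pow_bound2[OF P4] by linarith
      then show ?thesis unfolding B1 cs by (simp add: mult.commute)
    next
      case False
      have "{j} \<inter> Save f m = {}" using False nR unfolding Save_def by auto
      then have cs: "card ({j} \<inter> Save f m) = 0" by simp
      have P3: "bud f m j = 3" using False q3 unfolding bud_def by auto
      have "card (Aset f m {j})^2 \<le> 2^2" by (rule power_mono) (use cU P3 in simp_all)
      then show ?thesis unfolding B1 cs using P3 by simp
    qed
  next
    case False
    then have ne: "j \<noteq> sig f m j" by simp
    have bs: "(\<Sum>r\<in>Blk f m j. bud f m r) = 2 * bud f m j" unfolding Bj using ne bsig by simp
    have cT: "card (Aset f m (Blk f m j)) \<le> card (Tset (bud f m j))"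
      unfolding Bj by (rule card_pair_le[OF jI(1) ne])
    have e4: "(2::nat) ^ (2 * bud f m j) = 4 ^ bud f m j" by (simp add: power_mult)
    show ?thesis
    proof (cases "j < f mod m \<or> 4 \<le> f div m")
      case True
      have "Blk f m j \<inter> Save f m = {j, sig f m j}"
        using Bj True jI sI sig_lt[OF mpos rpos jI(1)] unfolding Save_def by auto
      then have cs: "card (Blk f m j \<inter> Save f m) = 2" using ne by simp
      have P4: "4 \<le> bud f m j" using True q3 unfolding bud_def by auto
      have key: "100 * card (Tset (bud f m j))^2 \<le> 81 * 4 ^ bud f m j"
      proof (cases "bud f m j = 4")
        case True then show ?thesis using card_T4 by simp
      next
        case False
        then have P5: "5 \<le> bud f m j" using P4 by simp
        have "card (Tset (bud f m j))^2 \<le> (bud f m j * bud f m j)^2"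
          by (rule power_mono[OF card_T_le]) simp
        then show ?thesis using pow_bound1[OF P5] by linarith
      qed
      have "card (Aset f m (Blk f m j))^2 \<le> card (Tset (bud f m j))^2" by (rule power_mono[OF cT]) simp
      then have "100 * card (Aset f m (Blk f m j))^2 \<le> 81 * 4 ^ bud f m j" using key by linarith
      then show ?thesis unfolding cs bs e4 by (simp add: mult.commute)
    next
      case False
      have "Blk f m j \<inter> Save f m = {}" using Bj False nR sig_lt[OF mpos rpos jI(1)] unfolding Save_def by auto
      then have cs: "card (Blk f m j \<inter> Save f m) = 0" by simp
      have P3: "bud f m j = 3" using False q3 unfolding bud_def by auto
      have "card (Aset f m (Blk f m j))^2 \<le> card (Tset 3)^2" by (rule power_mono) (use cT P3 in simp_all)
      then show ?thesis unfolding cs bs e4 P3 using card_T3 by simp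
    qed
  qed
qed

end

definition NSF :: "nat \<Rightarrow> nat \<Rightarrow> nat set set" where
  "NSF f m = {S. numerical_semigroup S \<and> frobenius S = int f \<and> multiplicity_ns S = m}"

context
  fixes f m :: nat
  assumes mpos: "0 < m" and rpos: "0 < f mod m" and q3: "3 \<le> f div m"
begin

lemma Blk_finite: "j \<in> Jset f m \<Longrightarrow> finite (Blk f m j)"
  using Blk_I[OF mpos rpos] finite_Ires[OF mpos rpos] by (meson finite_subset)

lemma total_ineq:
  "10 ^ card (Save f m) * (\<Prod>j\<in>Jset f m. card (Aset f m (Blk f m j)))^2
    \<le> 2 ^ (\<Sum>r\<in>Ires f m. bud f m r) * 9 ^ card (Save f m)"
proof -
  note fJ = finite_Jset[OF mpos rpos]
  have disj: "\<forall>i\<in>Jset f m. \<forall>j\<in>Jset f m. i \<noteq> j \<longrightarrow> Blk f m i \<inter> Blk f m j = {}"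
    using Blk_disj[OF mpos rpos] by blast
  have disj2: "\<forall>i\<in>Jset f m. \<forall>j\<in>Jset f m. i \<noteq> j \<longrightarrow> (Blk f m i \<inter> Save f m) \<inter> (Blk f m j \<inter> Save f m) = {}"
    using disj by blast
  have fin: "\<forall>j\<in>Jset f m. finite (Blk f m j)" using Blk_finite by blast
  have fin2: "\<forall>j\<in>Jset f m. finite (Blk f m j \<inter> Save f m)" using fin by blast
  have SU: "Save f m = (\<Union>j\<in>Jset f m. Blk f m j \<inter> Save f m)"
    using Save_I[OF mpos rpos q3] Blk_cover[OF mpos rpos] by blast
  have cS: "card (Save f m) = (\<Sum>j\<in>Jset f m. card (Blk f m j \<inter> Save f m))"
    by (subst SU, rule card_UN_disjoint[OF fJ fin2 disj2])
  have bS: "(\<Sum>r\<in>Ires f m. bud f m r) = (\<Sum>j\<in>Jset f m. \<Sum>r\<in>Blk f m j. bud f m r)"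
    by (subst Blk_cover[OF mpos rpos, symmetric], rule sum.UNION_disjoint[OF fJ fin disj])
  have "10 ^ card (Save f m) * (\<Prod>j\<in>Jset f m. card (Aset f m (Blk f m j)))^2
     = (\<Prod>j\<in>Jset f m. 10 ^ card (Blk f m j \<inter> Save f m) * card (Aset f m (Blk f m j))^2)"
    unfolding cS power_sum prod_power_distrib prod.distrib by simp
  also have "\<dots> \<le> (\<Prod>j\<in>Jset f m. 2 ^ (\<Sum>r\<in>Blk f m j. bud f m r) * 9 ^ card (Blk f m j \<inter> Save f m))"
    by (rule prod_mono) (use blk_ineq[OF mpos rpos q3] in auto)
  also have "\<dots> = 2 ^ (\<Sum>r\<in>Ires f m. bud f m r) * 9 ^ card (Save f m)"
    unfolding cS bS power_sum prod.distrib by simp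
  finally show ?thesis .
qed

lemma bud_sum: "(\<Sum>r\<in>Ires f m. bud f m r) \<le> f"
proof -
  have e: "\<And>r. bud f m r = f div m + (if r < f mod m then 1 else 0)" unfolding bud_def by simp
  have A: "(\<Sum>r\<in>Ires f m. bud f m r) = card (Ires f m) * (f div m) + (\<Sum>r\<in>Ires f m. if r < f mod m then 1 else 0)"
    unfolding e sum.distrib by simp
  have A2: "(\<Sum>r\<in>Ires f m. if r < f mod m then (1::nat) else 0) = card {r \<in> Ires f m. r < f mod m}"
  proof -
    have "card {r \<in> Ires f m. r < f mod m} = (\<Sum>r\<in>{r \<in> Ires f m. r < f mod m}. (1::nat))" by simp
    also have "\<dots> = (\<Sum>r\<in>Ires f m. if r < f mod m then 1 else 0)"
      by (rule sum.inter_filter[OF finite_Ires[OF mpos rpos]])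
    finally show ?thesis by simp
  qed
  have B: "card {r \<in> Ires f m. r < f mod m} \<le> f mod m"
    using card_mono[of "{..<f mod m}" "{r \<in> Ires f m. r < f mod m}"] by auto
  have "card (Ires f m) \<le> m"
    using card_mono[of "{..<m}" "Ires f m"] unfolding Ires_def by auto
  then have C: "card (Ires f m) * (f div m) \<le> m * (f div m)" by (rule mult_le_mono1)
  have D: "m * (f div m) + f mod m = f" by (simp add: mult.commute)
  show ?thesis using A A2 B C D by linarith
qed

lemma save_lb: "m \<le> 8 * card (Save f m) + 16"
proof (cases "4 \<le> f div m")
  case True
  have "Ires f m \<subseteq> Save f m" unfolding Save_def using True by auto
  then have a: "card (Ires f m) \<le> card (Save f m)"
    by (rule card_mono[OF finite_subset[OF Save_I[OF mpos rpos q3] finite_Ires[OF mpos rpos]]])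
  have "{1..<m} - {f mod m} \<subseteq> Ires f m" unfolding Ires_def by auto
  then have "card ({1..<m} - {f mod m}) \<le> card (Ires f m)" by (rule card_mono[OF finite_Ires[OF mpos rpos]])
  moreover have "card ({1..<m} - {f mod m}) = m - 2"
    using rpos mod_less_divisor[OF mpos, of f] by (simp add: card_Diff_singleton)
  ultimately show ?thesis using a by linarith
next
  case False
  then have q: "f div m = 3" using q3 by simp
  have fS: "finite (Save f m)" by (rule finite_subset[OF Save_I[OF mpos rpos q3] finite_Ires[OF mpos rpos]])
  show ?thesis
  proof (cases "m \<le> 8 * (f mod m)")
    case True
    have "{1..<f mod m} \<subseteq> Save f m" unfolding Save_def Ires_def
      using mod_less_divisor[OF mpos, of f] by auto
    then have "card {1..<f mod m} \<le> card (Save f m)" by (rule card_mono[OF fS])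
    then show ?thesis using True by simp
  next
    case False
    have "{m div 8 + 1..<(m+3) div 4} \<subseteq> R0 f m" unfolding R0_def using q False by auto
    then have "{m div 8 + 1..<(m+3) div 4} \<subseteq> Save f m" unfolding Save_def by auto
    then have "card {m div 8 + 1..<(m+3) div 4} \<le> card (Save f m)" by (rule card_mono[OF fS])
    then have "(m+3) div 4 - (m div 8 + 1) \<le> card (Save f m)" by simp
    moreover have "m \<le> 4 * ((m+3) div 4)" by presburger
    moreover have "8 * (m div 8) \<le> m" by presburger
    ultimately show ?thesis by linarith
  qed
qed

end

lemma NSF_inj:
  assumes mpos: "0 < m" and rpos: "0 < f mod m" and q3: "3 \<le> f div m"
    and S: "S1 \<in> NSF f m" "S2 \<in> NSF f m"
    and agree: "\<And>r. r \<in> Ires f m \<Longrightarrow> kunz S1 m r = kunz S2 m r"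
  shows "S1 = S2"
proof -
  have n1: "numerical_semigroup S1" "frobenius S1 = int f" "m = multiplicity_ns S1" using S(1) unfolding NSF_def by auto
  have n2: "numerical_semigroup S2" "frobenius S2 = int f" "m = multiplicity_ns S2" using S(2) unfolding NSF_def by auto
  have all: "kunz S1 m r = kunz S2 m r" if "r < m" for r
  proof (cases "r = 0")
    case True then show ?thesis using kunz_zero[OF n1] kunz_zero[OF n2] by simp
  next
    case False
    show ?thesis
    proof (cases "r = f mod m")
      case True
      have "kunz S1 m r * m = kunz S2 m r * m" unfolding True using kunz_rho[OF n1] kunz_rho[OF n2] by linarith
      then show ?thesis using mpos by simp
    next
      case F2: False
      then show ?thesis using agree False that unfolding Ires_def by simp
    qed
  qed
  show ?thesis
  proof (rule set_eqI)
    fix x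
    show "x \<in> S1 \<longleftrightarrow> x \<in> S2"
      using kunz_char[OF n1, of x] kunz_char[OF n2, of x] all[of "x mod m"] mpos by simp
  qed
qed

lemma NSF_mem:
  assumes mpos: "0 < m" and rpos: "0 < f mod m" and q3: "3 \<le> f div m"
    and S: "S \<in> NSF f m" and j: "j \<in> Jset f m"
  shows "restrict (kunz S m) (Blk f m j) \<in> Aset f m (Blk f m j)"
proof -
  have n: "numerical_semigroup S" "frobenius S = int f" "m = multiplicity_ns S" using S unfolding NSF_def by auto
  have BI: "Blk f m j \<subseteq> Ires f m" by (rule Blk_I[OF mpos rpos j])
  have c1: "\<forall>r\<in>Blk f m j. 1 \<le> restrict (kunz S m) (Blk f m j) r \<and>
        restrict (kunz S m) (Blk f m j) r * m + r + 1 \<le> f + m"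
  proof
    fix r assume r: "r \<in> Blk f m j"
    then have rI: "0 < r" "r < m" "r \<noteq> f mod m" using BI unfolding Ires_def by auto
    show "1 \<le> restrict (kunz S m) (Blk f m j) r \<and>
        restrict (kunz S m) (Blk f m j) r * m + r + 1 \<le> f + m"
      using kunz_pos[OF n rI(1,2)] kunz_upper[OF n rI(2,3)] r by simp
  qed
  have c2: "\<forall>r\<in>Blk f m j. \<forall>s\<in>Blk f m j. (r + s) mod m = f mod m \<longrightarrow>
      f + m \<le> restrict (kunz S m) (Blk f m j) r * m + r + restrict (kunz S m) (Blk f m j) s * m + s"
  proof (intro ballI impI)
    fix r s assume r: "r \<in> Blk f m j" and s: "s \<in> Blk f m j" and rs: "(r + s) mod m = f mod m"
    have "r < m" "s < m" using r s BI unfolding Ires_def by auto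
    then show "f + m \<le> restrict (kunz S m) (Blk f m j) r * m + r + restrict (kunz S m) (Blk f m j) s * m + s"
      using kunz_pair[OF n _ _ rs] r s by simp
  qed
  have c3: "\<forall>r\<in>Blk f m j. 2 * r \<in> Blk f m j \<longrightarrow>
      restrict (kunz S m) (Blk f m j) (2 * r) \<le> 2 * restrict (kunz S m) (Blk f m j) r"
  proof (intro ballI impI)
    fix r assume r: "r \<in> Blk f m j" and r2: "2 * r \<in> Blk f m j"
    have "2 * r < m" using r2 BI unfolding Ires_def by auto
    then show "restrict (kunz S m) (Blk f m j) (2 * r) \<le> 2 * restrict (kunz S m) (Blk f m j) r"
      using kunz_double[OF n] r r2 by simp
  qed
  have "okb f m (Blk f m j) (restrict (kunz S m) (Blk f m j))"
    unfolding okb_def using c1 c2 c3 by blast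
  then show ?thesis unfolding Aset_def by auto
qed

lemma NSF_bound:
  assumes mpos: "0 < m" and q3: "3 \<le> f div m"
  shows "\<exists>s. m \<le> 8 * s + 16 \<and> 10 ^ s * card (NSF f m)^2 \<le> 2 ^ f * 9 ^ s"
proof (cases "NSF f m = {}")
  case True then show ?thesis by (intro exI[of _ m]) simp
next
  case False
  then obtain S where S: "S \<in> NSF f m" by auto
  then have n: "numerical_semigroup S" "frobenius S = int f" "m = multiplicity_ns S" unfolding NSF_def by auto
  have rpos: "0 < f mod m" using rho_pos[OF n] .
  have c: "card (NSF f m) \<le> (\<Prod>j\<in>Jset f m. card (Aset f m (Blk f m j)))"
  proof (rule card_blocks[where k = "\<lambda>S. kunz S m" and B = "Blk f m"])
    show "finite (Jset f m)" by (rule finite_Jset[OF mpos rpos])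
    show "\<And>j. j \<in> Jset f m \<Longrightarrow> finite (Aset f m (Blk f m j))"
      using finite_Aset[OF mpos rpos q3] Blk_finite[OF mpos rpos q3] by blast
    show "\<And>S1 S2. S1 \<in> NSF f m \<Longrightarrow> S2 \<in> NSF f m \<Longrightarrow>
        (\<And>j r. j \<in> Jset f m \<Longrightarrow> r \<in> Blk f m j \<Longrightarrow> kunz S1 m r = kunz S2 m r) \<Longrightarrow> S1 = S2"
    proof -
      fix S1 S2 assume a: "S1 \<in> NSF f m" "S2 \<in> NSF f m"
        and h: "\<And>j r. j \<in> Jset f m \<Longrightarrow> r \<in> Blk f m j \<Longrightarrow> kunz S1 m r = kunz S2 m r"
      show "S1 = S2"
      proof (rule NSF_inj[OF mpos rpos q3 a])
        fix r assume "r \<in> Ires f m"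
        then obtain j where "j \<in> Jset f m" "r \<in> Blk f m j" using Blk_cover[OF mpos rpos] by blast
        then show "kunz S1 m r = kunz S2 m r" by (rule h)
      qed
    qed
    show "\<And>S j. S \<in> NSF f m \<Longrightarrow> j \<in> Jset f m \<Longrightarrow> restrict (kunz S m) (Blk f m j) \<in> Aset f m (Blk f m j)"
      by (rule NSF_mem[OF mpos rpos q3])
  qed
  have "card (NSF f m)^2 \<le> (\<Prod>j\<in>Jset f m. card (Aset f m (Blk f m j)))^2" by (rule power_mono[OF c]) simp
  then have "10 ^ card (Save f m) * card (NSF f m)^2 \<le> 10 ^ card (Save f m) * (\<Prod>j\<in>Jset f m. card (Aset f m (Blk f m j)))^2"
    by simp
  also have "\<dots> \<le> 2 ^ (\<Sum>r\<in>Ires f m. bud f m r) * 9 ^ card (Save f m)" by (rule total_ineq[OF mpos rpos q3])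
  also have "\<dots> \<le> 2 ^ f * 9 ^ card (Save f m)"
    using bud_sum[OF mpos rpos q3] by (simp add: power_increasing)
  finally show ?thesis using save_lb[OF mpos rpos q3] by blast
qed

definition FS :: "nat \<Rightarrow> nat set set" where
  "FS f = {S. numerical_semigroup S \<and> frobenius S = int f}"

lemma FS_finite: "finite (FS f)"
proof (rule inj_on_finite[where f = "\<lambda>S. S \<inter> {..f}" and B = "Pow {..f}"])
  show "inj_on (\<lambda>S. S \<inter> {..f}) (FS f)"
  proof (rule inj_onI)
    fix S1 S2 assume S: "S1 \<in> FS f" "S2 \<in> FS f" and e: "S1 \<inter> {..f} = S2 \<inter> {..f}"
    have a1: "\<And>x. f < x \<Longrightarrow> x \<in> S1" using S(1) ns_above unfolding FS_def by blast
    have a2: "\<And>x. f < x \<Longrightarrow> x \<in> S2" using S(2) ns_above unfolding FS_def by blast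
    show "S1 = S2"
    proof (rule set_eqI)
      fix x show "x \<in> S1 \<longleftrightarrow> x \<in> S2"
      proof (cases "x \<le> f")
        case True then show ?thesis using e by blast
      next
        case False then show ?thesis using a1 a2 by simp
      qed
    qed
  qed
qed auto

lemma NSF_FS: "NSF f m \<subseteq> FS f" unfolding NSF_def FS_def by auto

lemma NSF_crude:
  assumes mpos: "0 < m"
  shows "card (NSF f m) \<le> (f+2)^m"
proof -
  have "card (NSF f m) \<le> card ({..<m} \<rightarrow>\<^sub>E {0..f+1})"
  proof (rule card_inj_on_le[where f = "\<lambda>S. restrict (kunz S m) {..<m}"])
    show "inj_on (\<lambda>S. restrict (kunz S m) {..<m}) (NSF f m)"
    proof (rule inj_onI)
      fix S1 S2 assume S: "S1 \<in> NSF f m" "S2 \<in> NSF f m"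
        and e: "restrict (kunz S1 m) {..<m} = restrict (kunz S2 m) {..<m}"
      have n1: "numerical_semigroup S1" "frobenius S1 = int f" "m = multiplicity_ns S1" using S(1) unfolding NSF_def by auto
      have n2: "numerical_semigroup S2" "frobenius S2 = int f" "m = multiplicity_ns S2" using S(2) unfolding NSF_def by auto
      have all: "kunz S1 m r = kunz S2 m r" if "r < m" for r
        using fun_cong[OF e, of r] that by simp
      show "S1 = S2"
      proof (rule set_eqI)
        fix x
        show "x \<in> S1 \<longleftrightarrow> x \<in> S2"
          using kunz_char[OF n1, of x] kunz_char[OF n2, of x] all[of "x mod m"] mpos by simp
      qed
    qed
    show "(\<lambda>S. restrict (kunz S m) {..<m}) ` NSF f m \<subseteq> {..<m} \<rightarrow>\<^sub>E {0..f+1}"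
    proof
      fix g assume "g \<in> (\<lambda>S. restrict (kunz S m) {..<m}) ` NSF f m"
      then obtain S where S: "S \<in> NSF f m" and g: "g = restrict (kunz S m) {..<m}" by auto
      have n: "numerical_semigroup S" "frobenius S = int f" "m = multiplicity_ns S" using S unfolding NSF_def by auto
      have "kunz S m r \<le> f + 1" for r
      proof (rule kunz_le[OF n])
        have "(f+1) * 1 \<le> (f+1) * m" by (rule mult_le_mono2) (use mpos in simp)
        then have "f < (f+1) * m + r" by simp
        then show "(f+1) * m + r \<in> S" by (rule ns_above[OF n(1,2)])
      qed
      then show "g \<in> {..<m} \<rightarrow>\<^sub>E {0..f+1}" unfolding g by auto
    qed
    show "finite ({..<m} \<rightarrow>\<^sub>E {0..f+1})" by (intro finite_PiE) auto
  qed
  also have "\<dots> = (f+2)^m" by (simp add: card_PiE)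
  finally show ?thesis .
qed

lemma depth_eq:
  assumes "S \<in> FS f"
  shows "depth S = nat \<lceil>real (f+1) / real (multiplicity_ns S)\<rceil>"
  using assms ns_conductor unfolding FS_def depth_def by auto

lemma depth_ge4:
  assumes S: "S \<in> FS f" and d: "4 \<le> depth S"
  shows "3 \<le> f div multiplicity_ns S"
proof -
  define m where "m = multiplicity_ns S"
  have n: "numerical_semigroup S" "frobenius S = int f" using S unfolding FS_def by auto
  have mpos: "0 < m" using ns_mult(2)[OF n] m_def by simp
  have "3 * m \<le> f"
  proof (rule ccontr)
    assume "\<not> 3 * m \<le> f"
    then have "f + 1 \<le> 3 * m" by simp
    then have "real (f+1) \<le> 3 * real m" by linarith
    then have "real (f+1) / real m \<le> 3" using mpos by (simp add: divide_le_eq)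
    then have "\<lceil>real (f+1) / real m\<rceil> \<le> 3" by (simp add: ceiling_le_iff)
    then have "depth S \<le> 3" using depth_eq[OF S] m_def by simp
    then show False using d by simp
  qed
  then have "(3 * m) div m \<le> f div m" by (rule div_le_mono)
  then show ?thesis using mpos m_def by simp
qed

lemma depth_le1:
  assumes S: "S \<in> FS f" and d: "depth S \<le> 1"
  shows "multiplicity_ns S = f + 1"
proof -
  define m where "m = multiplicity_ns S"
  have n: "numerical_semigroup S" "frobenius S = int f" using S unfolding FS_def by auto
  have mpos: "0 < m" using ns_mult(2)[OF n] m_def by simp
  have mle: "m \<le> f + 1" using ns_mult(4)[OF n] m_def by simp
  have "nat \<lceil>real (f+1) / real m\<rceil> \<le> 1" using d depth_eq[OF S] m_def by simp
  then have "\<lceil>real (f+1) / real m\<rceil> \<le> 1" by (simp add: nat_le_iff)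
  then have "real (f+1) / real m \<le> 1" by (simp add: ceiling_le_iff)
  then have "real (f+1) \<le> real m" using mpos by (simp add: divide_le_eq)
  then show ?thesis using mle m_def by simp
qed

lemma NSF_top: "card (NSF f (f+1)) \<le> 1"
proof -
  have "NSF f (f+1) \<subseteq> {{x. x = 0 \<or> f < x}}"
  proof
    fix S assume S: "S \<in> NSF f (f+1)"
    have n: "numerical_semigroup S" "frobenius S = int f" "multiplicity_ns S = f + 1" using S unfolding NSF_def by auto
    have "S = {x. x = 0 \<or> f < x}"
    proof (rule set_eqI)
      fix x show "x \<in> S \<longleftrightarrow> x \<in> {x. x = 0 \<or> f < x}"
      proof
        assume x: "x \<in> S"
        show "x \<in> {x. x = 0 \<or> f < x}"
        proof (cases "x = 0")
          case False
          then have "f + 1 \<le> x" using ns_mult(3)[OF n(1,2) x] n(3) by simp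
          then show ?thesis by simp
        qed simp
      next
        assume "x \<in> {x. x = 0 \<or> f < x}"
        then show "x \<in> S" using ns_zero[OF n(1)] ns_above[OF n(1,2), of x] by auto
      qed
    qed
    then show "S \<in> {{x. x = 0 \<or> f < x}}" by simp
  qed
  then have "card (NSF f (f+1)) \<le> card {{x. x = 0 \<or> f < x}}" by (rule card_mono[rotated]) simp
  then show ?thesis by simp
qed


definition SA :: "nat \<Rightarrow> nat set \<Rightarrow> nat set" where
  "SA f A = {0, f div 2 + 1} \<union> A \<union> {f<..}"

lemma SA_props:
  assumes f3: "3 \<le> f" and A: "A \<subseteq> {f div 2 + 1<..<f}"
  shows "numerical_semigroup (SA f A)" "frobenius (SA f A) = int f" "depth (SA f A) = 2"
proof -
  define m0 where "m0 = f div 2 + 1"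
  have m0f: "m0 < f" using f3 unfolding m0_def by linarith
  have m0f2: "f + 1 \<le> 2 * m0" unfolding m0_def by presburger
  have ge: "\<And>x. x \<in> SA f A \<Longrightarrow> x \<noteq> 0 \<Longrightarrow> m0 \<le> x"
    using A m0f unfolding SA_def m0_def by auto
  have fnot: "f \<notin> SA f A" using A m0f f3 unfolding SA_def m0_def by auto
  have above: "\<And>n. f < n \<Longrightarrow> n \<in> SA f A" unfolding SA_def by auto
  show ns: "numerical_semigroup (SA f A)"
    unfolding numerical_semigroup_def
  proof (intro conjI ballI)
    show "0 \<in> SA f A" unfolding SA_def by simp
  next
    fix x y assume x: "x \<in> SA f A" and y: "y \<in> SA f A"
    show "x + y \<in> SA f A"
    proof (cases "x = 0 \<or> y = 0")
      case True then show ?thesis using x y by auto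
    next
      case False
      then have "m0 \<le> x" "m0 \<le> y" using ge x y by auto
      then have "f < x + y" using m0f2 by linarith
      then show ?thesis by (rule above)
    qed
  next
    have "UNIV - SA f A \<subseteq> {..f}" using above by (meson DiffD2 atMost_iff not_le subsetI)
    then show "finite (UNIV - SA f A)" by (rule finite_subset) simp
  qed
  have cond: "conductor (SA f A) = f + 1"
    unfolding conductor_def
  proof (rule Least_equality)
    show "\<forall>n\<ge>f + 1. n \<in> SA f A" using above by auto
  next
    fix c assume c: "\<forall>n\<ge>c. n \<in> SA f A"
    show "f + 1 \<le> c"
    proof (rule ccontr)
      assume "\<not> f + 1 \<le> c"
      then have "f \<in> SA f A" using c by auto
      then show False using fnot by simp
    qed
  qed
  show "frobenius (SA f A) = int f" unfolding frobenius_def cond by simp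
  have mult: "multiplicity_ns (SA f A) = m0"
    unfolding multiplicity_ns_def
  proof (rule Least_equality)
    show "m0 \<in> SA f A \<and> m0 \<noteq> 0" unfolding SA_def m0_def by simp
  next
    fix y assume "y \<in> SA f A \<and> y \<noteq> 0"
    then show "m0 \<le> y" using ge by auto
  qed
  have "\<lceil>real (f+1) / real m0\<rceil> = 2"
  proof (rule ceiling_unique)
    have pos: "0 < real m0" unfolding m0_def by simp
    have "real m0 < real (f + 1)" using m0f by simp
    then show "real_of_int 2 - 1 < real (f+1) / real m0" using pos by (simp add: less_divide_eq)
    have "real (f+1) \<le> 2 * real m0" using m0f2 by linarith
    then show "real (f+1) / real m0 \<le> real_of_int 2" using pos by (simp add: divide_le_eq)
  qed
  then show "depth (SA f A) = 2" unfolding depth_def cond mult by simp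
qed

lemma Fr2_lower:
  assumes f3: "3 \<le> f"
  shows "2 ^ (f - 2 - f div 2) \<le> Fr_depth 2 f"
proof -
  define D2 where "D2 = {S. numerical_semigroup S \<and> frobenius S = int f \<and> depth S = 2}"
  have fD: "finite D2" by (rule finite_subset[OF _ FS_finite[of f]]) (auto simp: D2_def FS_def)
  have "card (Pow {f div 2 + 1<..<f}) \<le> card D2"
  proof (rule card_inj_on_le[OF _ _ fD])
    show "inj_on (SA f) (Pow {f div 2 + 1<..<f})"
    proof (rule inj_onI)
      fix A1 A2 assume A: "A1 \<in> Pow {f div 2 + 1<..<f}" "A2 \<in> Pow {f div 2 + 1<..<f}"
        and e: "SA f A1 = SA f A2"
      have "SA f A1 \<inter> {f div 2 + 1<..<f} = A1" using A(1) unfolding SA_def by auto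
      moreover have "SA f A2 \<inter> {f div 2 + 1<..<f} = A2" using A(2) unfolding SA_def by auto
      ultimately show "A1 = A2" using e by simp
    qed
    show "SA f ` Pow {f div 2 + 1<..<f} \<subseteq> D2"
      using SA_props[OF f3] unfolding D2_def by auto
  qed
  moreover have "card (Pow {f div 2 + 1<..<f}) = 2 ^ (f - 2 - f div 2)"
    by (simp add: card_Pow)
  ultimately show ?thesis unfolding Fr_depth_def D2_def by simp
qed

definition Ms :: "nat \<Rightarrow> nat set" where
  "Ms f = {m. 0 < m \<and> m \<le> f \<and> 3 \<le> f div m}"
definition Rst :: "nat \<Rightarrow> nat set set" where
  "Rst f = {S \<in> FS f. depth S \<noteq> 2 \<and> depth S \<noteq> 3}"
definition bnd :: "nat \<Rightarrow> real" where
  "bnd f = (real f + 2) powr sqrt (real f) + 2 powr (real f / 2) * (9/10) powr ((sqrt (real f) - 16) / 16)"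

lemma Fr_split: "Fr f = Fr_depth 2 f + Fr_depth 3 f + card (Rst f)"
proof -
  define D2 where "D2 = {S \<in> FS f. depth S = 2}"
  define D3 where "D3 = {S \<in> FS f. depth S = 3}"
  have e: "FS f = D2 \<union> D3 \<union> Rst f" unfolding D2_def D3_def Rst_def by auto
  have fin: "finite D2" "finite D3" "finite (Rst f)" using FS_finite[of f]
    unfolding D2_def D3_def Rst_def by auto
  have "card (FS f) = card (D2 \<union> D3) + card (Rst f)"
    unfolding e by (rule card_Un_disjoint) (use fin in \<open>auto simp: D2_def D3_def Rst_def\<close>)
  also have "card (D2 \<union> D3) = card D2 + card D3"
    by (rule card_Un_disjoint) (use fin in \<open>auto simp: D2_def D3_def\<close>)
  finally show ?thesis unfolding Fr_def Fr_depth_def D2_def D3_def FS_def by simp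
qed

lemma Rst_card: "card (Rst f) \<le> 1 + (\<Sum>m\<in>Ms f. card (NSF f m))"
proof -
  have finMs: "finite (Ms f)" unfolding Ms_def by (rule finite_subset[of _ "{..f}"]) auto
  have sub: "Rst f \<subseteq> NSF f (f+1) \<union> (\<Union>m\<in>Ms f. NSF f m)"
  proof
    fix S assume S: "S \<in> Rst f"
    then have SF: "S \<in> FS f" and d: "depth S \<noteq> 2" "depth S \<noteq> 3" unfolding Rst_def by auto
    have n: "numerical_semigroup S" "frobenius S = int f" using SF unfolding FS_def by auto
    show "S \<in> NSF f (f+1) \<union> (\<Union>m\<in>Ms f. NSF f m)"
    proof (cases "depth S \<le> 1")
      case True
      then have "multiplicity_ns S = f + 1" by (rule depth_le1[OF SF])
      then show ?thesis using n unfolding NSF_def by auto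
    next
      case False
      then have "4 \<le> depth S" using d by simp
      then have q: "3 \<le> f div multiplicity_ns S" by (rule depth_ge4[OF SF])
      have mpos: "0 < multiplicity_ns S" using ns_mult(2)[OF n] by simp
      have "multiplicity_ns S \<le> f"
      proof (rule ccontr)
        assume "\<not> multiplicity_ns S \<le> f"
        then have "f div multiplicity_ns S = 0" by simp
        then show False using q by simp
      qed
      then have "multiplicity_ns S \<in> Ms f" using q mpos unfolding Ms_def by auto
      then show ?thesis using n unfolding NSF_def by auto
    qed
  qed
  have fin1: "finite (NSF f (f+1) \<union> (\<Union>m\<in>Ms f. NSF f m))"
    using FS_finite[of f] NSF_FS[of f] finMs by (meson finite_UN_I finite_Un finite_subset)
  have "card (Rst f) \<le> card (NSF f (f+1) \<union> (\<Union>m\<in>Ms f. NSF f m))" by (rule card_mono[OF fin1 sub])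
  also have "\<dots> \<le> card (NSF f (f+1)) + card (\<Union>m\<in>Ms f. NSF f m)" by (rule card_Un_le)
  also have "card (\<Union>m\<in>Ms f. NSF f m) \<le> (\<Sum>m\<in>Ms f. card (NSF f m))" by (rule card_UN_le[OF finMs])
  finally show ?thesis using NSF_top[of f] by linarith
qed

lemma NSF_real:
  assumes m: "m \<in> Ms f"
  shows "real (card (NSF f m)) \<le> bnd f"
proof -
  have mpos: "0 < m" and q3: "3 \<le> f div m" using m unfolding Ms_def by auto
  have b1: "0 \<le> 2 powr (real f / 2) * (9/10) powr ((sqrt (real f) - 16) / 16)" by simp
  have b2: "0 \<le> (real f + 2) powr sqrt (real f)" by simp
  show ?thesis
  proof (cases "real m \<le> sqrt (real f)")
    case True
    have "real (card (NSF f m)) \<le> real ((f+2)^m)" using NSF_crude[OF mpos, of f] by linarith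
    also have "\<dots> = (real f + 2) powr real m" by (simp add: powr_realpow add.commute)
    also have "\<dots> \<le> (real f + 2) powr sqrt (real f)" by (rule powr_mono[OF True]) simp
    finally show ?thesis unfolding bnd_def using b1 by linarith
  next
    case False
    obtain s where s: "m \<le> 8 * s + 16" "10 ^ s * card (NSF f m)^2 \<le> 2 ^ f * 9 ^ s"
      using NSF_bound[OF mpos q3] by blast
    define c where "c = real (card (NSF f m))"
    have "real (10 ^ s * card (NSF f m)^2) \<le> real (2 ^ f * 9 ^ s)" using s(2) by (simp only: of_nat_le_iff)
    then have "10 ^ s * c^2 \<le> 2 ^ f * 9 ^ s" unfolding c_def by simp
    then have "c^2 \<le> 2 ^ f * 9 ^ s / 10 ^ s" by (simp add: field_simps)
    also have "\<dots> = 2 ^ f * (9/10) ^ s" by (simp add: power_divide)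
    also have "\<dots> = 2 powr real f * (9/10) powr real s" by (simp add: powr_realpow)
    also have "\<dots> \<le> 2 powr real f * (9/10) powr ((sqrt (real f) - 16) / 8)"
    proof -
      have "real m \<le> real (8 * s + 16)" using s(1) by (simp only: of_nat_le_iff)
      then have "real m \<le> 8 * real s + 16" by simp
      moreover have "sqrt (real f) < real m" using False by simp
      ultimately have "sqrt (real f) - 16 \<le> 8 * real s" by linarith
      then have "(sqrt (real f) - 16) / 8 \<le> real s" by simp
      then have "(9/10::real) powr real s \<le> (9/10) powr ((sqrt (real f) - 16) / 8)"
        by (rule powr_mono') simp_all
      then show ?thesis by (simp add: mult_left_mono)
    qed
    also have "\<dots> = (2 powr (real f / 2) * (9/10) powr ((sqrt (real f) - 16) / 16))^2"
    proof -
      have ee: "(2 * sqrt (real f) - 32) / 16 = (sqrt (real f) - 16) / 8" by (simp add: field_simps)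
      show ?thesis by (simp add: power_mult_distrib powr_power ee)
    qed
    finally have "c \<le> 2 powr (real f / 2) * (9/10) powr ((sqrt (real f) - 16) / 16)"
      by (rule power2_le_imp_le) simp
    then show ?thesis unfolding bnd_def c_def using b2 by linarith
  qed
qed

lemma R_bound: "real (card (Rst f)) \<le> 1 + real f * bnd f"
proof -
  have finMs: "finite (Ms f)" unfolding Ms_def by (rule finite_subset[of _ "{..f}"]) auto
  have "Ms f \<subseteq> {1..f}" unfolding Ms_def by auto
  then have "card (Ms f) \<le> card {1..f}" by (intro card_mono) auto
  then have cMs: "card (Ms f) \<le> f" by simp
  have bpos: "0 \<le> bnd f" unfolding bnd_def by simp
  have "real (card (Rst f)) \<le> 1 + (\<Sum>m\<in>Ms f. real (card (NSF f m)))"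
  proof -
    have "real (card (Rst f)) \<le> real (1 + (\<Sum>m\<in>Ms f. card (NSF f m)))"
      using Rst_card[of f] by (simp only: of_nat_le_iff)
    then show ?thesis by simp
  qed
  also have "(\<Sum>m\<in>Ms f. real (card (NSF f m))) \<le> (\<Sum>m\<in>Ms f. bnd f)"
    by (rule sum_mono) (rule NSF_real)
  also have "\<dots> = real (card (Ms f)) * bnd f" by simp
  also have "\<dots> \<le> real f * bnd f" using cMs bpos by (simp add: mult_right_mono)
  finally show ?thesis by linarith
qed

lemma G_lower:
  assumes f3: "3 \<le> f"
  shows "2 powr (real f / 2) / 4 \<le> real (Fr_depth 2 f + Fr_depth 3 f)"
proof -
  have "real f / 2 - 2 \<le> real (f - 2 - f div 2)"
  proof -
    have "f \<le> 2 * (f - 2 - f div 2) + 4" using f3 by presburger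
    then show ?thesis by linarith
  qed
  then have "2 powr (real f / 2 - 2) \<le> 2 powr real (f - 2 - f div 2)" by (rule powr_mono) simp
  also have "\<dots> = real (2 ^ (f - 2 - f div 2))" by (simp add: powr_realpow)
  also have "\<dots> \<le> real (Fr_depth 2 f + Fr_depth 3 f)"
  proof -
    have "2 ^ (f - 2 - f div 2) \<le> Fr_depth 2 f + Fr_depth 3 f" using Fr2_lower[OF f3] by linarith
    then show ?thesis by (simp only: of_nat_le_iff)
  qed
  finally show ?thesis by (simp add: powr_diff)
qed

lemma h_lim: "((\<lambda>f::nat. (1 + real f * bnd f) / (2 powr (real f / 2) / 4)) \<longlongrightarrow> 0) at_top"
  unfolding bnd_def by real_asymp

theorem corollary4p2:
  shows "(\<lambda>f. real (Fr f)) \<sim>[at_top] (\<lambda>f. real (Fr_depth 2 f + Fr_depth 3 f))"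
proof (rule asymp_equivI')
  define G where "G f = real (Fr_depth 2 f + Fr_depth 3 f)" for f
  define R where "R f = real (card (Rst f))" for f
  define h where "h f = (1 + real f * bnd f) / (2 powr (real f / 2) / 4)" for f :: nat
  have ev3: "eventually (\<lambda>f::nat. 3 \<le> f) at_top" by (rule eventually_ge_at_top)
  have Gpos: "0 < G f" if "3 \<le> f" for f
  proof -
    have "0 < 2 powr (real f / 2) / 4" by simp
    also have "\<dots> \<le> G f" unfolding G_def by (rule G_lower[OF that])
    finally show ?thesis .
  qed
  have lim0: "((\<lambda>f. R f / G f) \<longlongrightarrow> 0) at_top"
  proof (rule tendsto_sandwich[of "\<lambda>_. 0" _ _ h])
    show "eventually (\<lambda>f. 0 \<le> R f / G f) at_top"
      by (rule always_eventually) (simp add: R_def G_def)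
    show "eventually (\<lambda>f. R f / G f \<le> h f) at_top"
      using ev3
    proof eventually_elim
      case (elim f)
      have "R f \<le> 1 + real f * bnd f" unfolding R_def by (rule R_bound)
      moreover have "0 \<le> R f" unfolding R_def by simp
      moreover have "2 powr (real f / 2) / 4 \<le> G f" unfolding G_def by (rule G_lower[OF elim])
      moreover have "0 < 2 powr (real f / 2) / 4" by simp
      ultimately show ?case unfolding h_def by (intro frac_le) simp_all
    qed
    show "((\<lambda>_. 0) \<longlongrightarrow> (0::real)) at_top" by simp
    show "(h \<longlongrightarrow> 0) at_top" unfolding h_def by (rule h_lim)
  qed
  then have "((\<lambda>f. 1 + R f / G f) \<longlongrightarrow> 1 + 0) at_top" by (intro tendsto_add) simp_all
  then have lim1: "((\<lambda>f. 1 + R f / G f) \<longlongrightarrow> 1) at_top" by simp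
  have "eventually (\<lambda>f. 1 + R f / G f = real (Fr f) / real (Fr_depth 2 f + Fr_depth 3 f)) at_top"
    using ev3
  proof eventually_elim
    case (elim f)
    have "real (Fr f) = G f + R f" unfolding G_def R_def using Fr_split[of f] by simp
    then show ?case using Gpos[OF elim] unfolding G_def[symmetric] by (simp add: field_simps)
  qed
  then show "((\<lambda>f. real (Fr f) / real (Fr_depth 2 f + Fr_depth 3 f)) \<longlongrightarrow> 1) at_top"
    using lim1 by (rule Lim_transform_eventually[rotated])
qed

end
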